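(* Let $V:\mathbb{R}\to\mathbb{R}$ be analytic at the origin. Then $V$ is separable (i.e. there exist univariate functions $F,G$ with $V\left(\frac{u+v}{2}\right)-V\left(\frac{u-v}{2}\right)=F(u)\,G(v)$ for all $u,v$) if and only if $V$ admits the functional form $$V\left(\frac{u+v}{2}\right)=\frac{1}{2}f(u)\,g(v)+h(u,v)$$ for some functions $f$ of $u$, $g$ of $v$, and $h$ of $(u,v)$ satisfying $g(-v)=-g(v)$ and $h(u,-v)=h(u,v)$. In this case the divisors of $V$ are $F=f$ and $G=g$.
   Context: A potential $V(q)$ is called separable if $V\left(\frac{u+v}{2}\right)-V\left(\frac{u-v}{2}\right)=F(u)\,G(v)$ where $F$ and $G$ are univariate functions of $u$ and $v$ respectively; $F$ and $G$ are called the divisors of $V$. *)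

theory Defs
  imports Complex_Main
begin

definition real_analytic_at_0 :: "(real \<Rightarrow> real) \<Rightarrow> bool" where
  "real_analytic_at_0 V \<longleftrightarrow>
     (\<exists>r>0. \<exists>a::nat \<Rightarrow> real. \<forall>x. \<bar>x\<bar> < r \<longrightarrow> (\<lambda>n. a n * x ^ n) sums V x)"

definition divisors :: "(real \<Rightarrow> real) \<Rightarrow> (real \<Rightarrow> real) \<Rightarrow> (real \<Rightarrow> real) \<Rightarrow> bool" where
  "divisors V F G \<longleftrightarrow> (\<forall>u v. V ((u + v) / 2) - V ((u - v) / 2) = F u * G v)"

definition separable :: "(real \<Rightarrow> real) \<Rightarrow> bool" where
  "separable V \<longleftrightarrow> (\<exists>F G. divisors V F G)"

end

theory Submission
  imports Defs
begin

lemma part2: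
  fixes V :: "real \<Rightarrow> real"
  assumes "\<forall>v. g (- v) = - g v" "\<forall>u v. h u (- v) = h u v"
    "\<forall>u v. V ((u + v) / 2) = 1/2 * f u * g v + h u v"
  shows "divisors V f g"
  unfolding divisors_def
proof (intro allI)
  fix u v :: real
  have "V ((u - v) / 2) = 1/2 * f u * g (-v) + h u (-v)"
    using assms(3)[rule_format, of u "-v"] by simp
  then show "V ((u + v) / 2) - V ((u - v) / 2) = f u * g v"
    using assms(3)[rule_format, of u v] assms(1,2) by simp
qed

lemma part1:
  fixes V :: "real \<Rightarrow> real"
  assumes "divisors V F G"
  shows "\<exists>f g (h :: real \<Rightarrow> real \<Rightarrow> real).
              (\<forall>v. g (- v) = - g v) \<and> (\<forall>u v. h u (- v) = h u v) \<and>
              (\<forall>u v. V ((u + v) / 2) = 1/2 * f u * g v + h u v)"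
proof -
  define g where "g v = (G v - G (-v)) / 2" for v
  define h where "h u v = V ((u + v) / 2) - 1/2 * F u * g v" for u v
  have D: "V ((u + v) / 2) - V ((u - v) / 2) = F u * G v" for u v
    using assms unfolding divisors_def by blast
  have E: "F u * g v = F u * G v" for u v
  proof -
    have "F u * G (-v) = - (F u * G v)" using D[of u v] D[of u "-v"] by simp
    then show ?thesis unfolding g_def by (simp add: algebra_simps)
  qed
  have "\<forall>v. g (- v) = - g v" unfolding g_def by (simp add: field_simps)
  moreover have "\<forall>u v. h u (- v) = h u v"
  proof (intro allI)
    fix u v :: real
    have "g (-v) = - g v" unfolding g_def by (simp add: field_simps)
    then show "h u (- v) = h u v" unfolding h_def using D[of u v] E[of u v]
      by (simp add: algebra_simps)
  qed
  moreover have "\<forall>u v. V ((u + v) / 2) = 1/2 * F u * g v + h u v"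
    unfolding h_def by simp
  ultimately show ?thesis by blast
qed

theorem theorem1:
  fixes V :: "real \<Rightarrow> real"
  assumes "real_analytic_at_0 V"
  shows "(separable V \<longleftrightarrow>
           (\<exists>f g (h :: real \<Rightarrow> real \<Rightarrow> real).
              (\<forall>v. g (- v) = - g v) \<and> (\<forall>u v. h u (- v) = h u v) \<and>
              (\<forall>u v. V ((u + v) / 2) = 1/2 * f u * g v + h u v)))
       \<and> (\<forall>f g (h :: real \<Rightarrow> real \<Rightarrow> real).
              (\<forall>v. g (- v) = - g v) \<and> (\<forall>u v. h u (- v) = h u v) \<and>
              (\<forall>u v. V ((u + v) / 2) = 1/2 * f u * g v + h u v)
            \<longrightarrow> divisors V f g)"
proof (intro conjI)
  show "\<forall>f g (h :: real \<Rightarrow> real \<Rightarrow> real).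
              (\<forall>v. g (- v) = - g v) \<and> (\<forall>u v. h u (- v) = h u v) \<and>
              (\<forall>u v. V ((u + v) / 2) = 1/2 * f u * g v + h u v)
            \<longrightarrow> divisors V f g"
    using part2 by blast
  show "separable V \<longleftrightarrow>
           (\<exists>f g (h :: real \<Rightarrow> real \<Rightarrow> real).
              (\<forall>v. g (- v) = - g v) \<and> (\<forall>u v. h u (- v) = h u v) \<and>
              (\<forall>u v. V ((u + v) / 2) = 1/2 * f u * g v + h u v))"
  proof
    assume "separable V"
    then obtain F G where "divisors V F G" unfolding separable_def by blast
    then show "\<exists>f g (h :: real \<Rightarrow> real \<Rightarrow> real).
              (\<forall>v. g (- v) = - g v) \<and> (\<forall>u v. h u (- v) = h u v) \<and>
              (\<forall>u v. V ((u + v) / 2) = 1/2 * f u * g v + h u v)" by (rule part1)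
  next
    assume "\<exists>f g (h :: real \<Rightarrow> real \<Rightarrow> real).
              (\<forall>v. g (- v) = - g v) \<and> (\<forall>u v. h u (- v) = h u v) \<and>
              (\<forall>u v. V ((u + v) / 2) = 1/2 * f u * g v + h u v)"
    then obtain f g h where "(\<forall>v. g (- v) = - g v)" "(\<forall>u v. h u (- v) = h u v)"
        "(\<forall>u v. V ((u + v) / 2) = 1/2 * f u * g v + h u v)" by blast
    then have "divisors V f g" by (rule part2)
    then show "separable V" unfolding separable_def by blast
  qed
qed

end
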